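(* Let $\theta>0$. The functions $\mathbf p_2,\mathbf p_3,\dots$ on $\mathbb Y$ belong to $\mathcal A_\theta$ and form a system of algebraically independent generators of $\mathcal A_\theta$ compatible with the filtration: under the identification $\mathcal A_\theta=\mathbb R[\mathbf p_2,\mathbf p_3,\dots]$, the filtration of $\mathcal A_\theta$ is the one determined by $\deg\mathbf p_m=m-1$, $m=2,3,\dots$. In other words, $\mathcal A_\theta$ coincides with the algebra of super-symmetric functions in Kerov's interlacing coordinates.
   Context: Draw $\lambda\in\mathbb Y$ in English convention (row axis downward, column axis to the right). The border of $\lambda$, traversed from $+\infty$ along the horizontal axis to $+\infty$ along the vertical axis, has $2d-1$ corners with coordinates $(r_k,s_k)$ ($r$ = row coordinate, $s$ = column coordinate), $1\le k\le 2d-1$, ordered along the path; odd $k$ are inner corners (horizontal-to-vertical turns), even $k$ outer corners. (E.g. for $\lambda=(3,3,1)$: inner corners $(0,3),(2,1),(3,0)$, outer corners $(2,3),(3,1)$.) Kerov's interlacing coordinates are $x_i=s_{2i-1}-\theta r_{2i-1}$ ($1\le i\le d$) and $y_j=s_{2j}-\theta r_{2j}$ ($1\le j\le d-1$); they satisfy $x_1>y_1>x_2>\dots>y_{d-1}>x_d$ and $\sum x_i-\sum y_j=0$. Set $\mathbf p_m(\lambda)=\sum_{i=1}^dx_i^m-\sum_{j=1}^{d-1}y_j^m$. $\mathcal A_\theta$ is the unital $\mathbb R$-algebra of functions on $\mathbb Y$ generated by the algebraically independent functions $p^*_{m;\theta}(\lambda)=\sum_{i=1}^{\ell(\lambda)}[(\lambda_i-\theta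 i)^m-(-\theta i)^m]$, $m\ge1$ ($\lambda_i$ row lengths, $\ell(\lambda)$ number of nonzero rows), filtered by $\deg p^*_{m;\theta}=m$. *)

theory Defs
  imports Complex_Main "HOL-Library.Poly_Mapping"
begin

definition is_partition :: "nat list \<Rightarrow> bool" where
  "is_partition xs \<longleftrightarrow> sorted_wrt (\<ge>) xs \<and> 0 \<notin> set xs"

definition YY :: "nat list set" where
  "YY = {xs. is_partition xs}"

text \<open>Row length lambda_i (1-based), zero beyond the last row.\<close>
definition part_at :: "nat list \<Rightarrow> nat \<Rightarrow> nat" where
  "part_at xs i = (if 1 \<le> i \<and> i \<le> length xs then xs ! (i - 1) else 0)"

text \<open>Corners (r,s) of the border of lambda (r row coordinate, s column coordinate).\<close>
definition inner_corners :: "nat list \<Rightarrow> (nat \<times> nat) set" where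
  "inner_corners xs = {(r, s). r \<le> length xs \<and> s = part_at xs (r + 1) \<and>
      (r = 0 \<or> part_at xs r > part_at xs (r + 1))}"

definition outer_corners :: "nat list \<Rightarrow> (nat \<times> nat) set" where
  "outer_corners xs = {(r, s). 1 \<le> r \<and> r \<le> length xs \<and> s = part_at xs r \<and>
      part_at xs r > part_at xs (r + 1)}"

definition kcoord :: "real \<Rightarrow> nat \<times> nat \<Rightarrow> real" where
  "kcoord \<theta> c = real (snd c) - \<theta> * real (fst c)"

definition pbold :: "real \<Rightarrow> nat \<Rightarrow> nat list \<Rightarrow> real" where
  "pbold \<theta> m xs = (\<Sum>c\<in>inner_corners xs. kcoord \<theta> c ^ m) - (\<Sum>c\<in>outer_corners xs. kcoord \<theta> c ^ m)"

definition pstar :: "real \<Rightarrow> nat \<Rightarrow> nat list \<Rightarrow> real" where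
  "pstar \<theta> m xs = (\<Sum>i = 1..length xs.
      (real (part_at xs i) - \<theta> * real i) ^ m - (- \<theta> * real i) ^ m)"

text \<open>Polynomials in countably many variables X_0, X_1, ... with real coefficients:
  a monomial is an exponent vector (finitely supported nat to nat); a polynomial is a finitely supported
  coefficient function on monomials.\<close>
type_synonym rpoly = "(nat \<Rightarrow>\<^sub>0 nat) \<Rightarrow>\<^sub>0 real"

definition evalmono :: "(nat \<Rightarrow> nat list \<Rightarrow> real) \<Rightarrow> (nat \<Rightarrow>\<^sub>0 nat) \<Rightarrow> nat list \<Rightarrow> real" where
  "evalmono g mo xs = (\<Prod>k\<in>Poly_Mapping.keys mo. g k xs ^ Poly_Mapping.lookup mo k)"

definition evalp :: "(nat \<Rightarrow> nat list \<Rightarrow> real) \<Rightarrow> rpoly \<Rightarrow> nat list \<Rightarrow> real" where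
  "evalp g P xs = (\<Sum>mo\<in>Poly_Mapping.keys P. Poly_Mapping.lookup P mo * evalmono g mo xs)"

definition wdeg :: "(nat \<Rightarrow> nat) \<Rightarrow> (nat \<Rightarrow>\<^sub>0 nat) \<Rightarrow> nat" where
  "wdeg w a = (\<Sum>k\<in>Poly_Mapping.keys a. Poly_Mapping.lookup a k * w k)"

definition filt :: "(nat \<Rightarrow> nat list \<Rightarrow> real) \<Rightarrow> (nat \<Rightarrow> nat) \<Rightarrow> nat \<Rightarrow> (nat list \<Rightarrow> real) set" where
  "filt g w n = {f. \<exists>P. (\<forall>a\<in>Poly_Mapping.keys P. wdeg w a \<le> n) \<and> (\<forall>xs\<in>YY. f xs = evalp g P xs)}"

definition alg_indep_on_Y :: "(nat \<Rightarrow> nat list \<Rightarrow> real) \<Rightarrow> bool" where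
  "alg_indep_on_Y g \<longleftrightarrow> (\<forall>P. (\<forall>xs\<in>YY. evalp g P xs = 0) \<longrightarrow> P = 0)"

text \<open>A_theta with its filtration: generators X_k := p*_{k+1}, deg = k+1.\<close>
definition Afilt :: "real \<Rightarrow> nat \<Rightarrow> (nat list \<Rightarrow> real) set" where
  "Afilt \<theta> n = filt (\<lambda>k. pstar \<theta> (k + 1)) (\<lambda>k. k + 1) n"

definition Atheta :: "real \<Rightarrow> (nat list \<Rightarrow> real) set" where
  "Atheta \<theta> = (\<Union>n. Afilt \<theta> n)"

text \<open>Filtration determined by the bold p's: X_k := p_{k+2}, deg = k+1 = (k+2)-1.\<close>
definition Pfilt :: "real \<Rightarrow> nat \<Rightarrow> (nat list \<Rightarrow> real) set" where
  "Pfilt \<theta> n = filt (\<lambda>k. pbold \<theta> (k + 2)) (\<lambda>k. k + 1) n"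

end

theory Submission
  imports Defs "HOL-Computational_Algebra.Polynomial"
begin


definition evalmonoG :: "(nat \<Rightarrow> 'x \<Rightarrow> real) \<Rightarrow> (nat \<Rightarrow>\<^sub>0 nat) \<Rightarrow> 'x \<Rightarrow> real" where
  "evalmonoG g mo x = (\<Prod>k\<in>Poly_Mapping.keys mo. g k x ^ Poly_Mapping.lookup mo k)"

definition evalpG :: "(nat \<Rightarrow> 'x \<Rightarrow> real) \<Rightarrow> rpoly \<Rightarrow> 'x \<Rightarrow> real" where
  "evalpG g P x = (\<Sum>mo\<in>Poly_Mapping.keys P. Poly_Mapping.lookup P mo * evalmonoG g mo x)"

lemma evalp_G: "evalp g P xs = evalpG g P xs"
  by (simp add: evalp_def evalpG_def evalmono_def evalmonoG_def)

lemma evalmonoG_superset: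
  assumes "finite S" "Poly_Mapping.keys mo \<subseteq> S"
  shows "evalmonoG g mo x = (\<Prod>k\<in>S. g k x ^ Poly_Mapping.lookup mo k)"
  unfolding evalmonoG_def
  by (rule prod.mono_neutral_left) (use assms in \<open>auto simp: in_keys_iff\<close>)

lemma evalmonoG_add: "evalmonoG g (a + b) x = evalmonoG g a x * evalmonoG g b x"
proof -
  let ?S = "Poly_Mapping.keys a \<union> Poly_Mapping.keys b"
  have "evalmonoG g (a + b) x = (\<Prod>k\<in>?S. g k x ^ Poly_Mapping.lookup (a+b) k)"
    by (rule evalmonoG_superset) (simp_all add: keys_add)
  also have "\<dots> = (\<Prod>k\<in>?S. g k x ^ Poly_Mapping.lookup a k * g k x ^ Poly_Mapping.lookup b k)"
    by (simp add: lookup_add power_add)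
  also have "\<dots> = evalmonoG g a x * evalmonoG g b x"
    by (simp add: prod.distrib evalmonoG_superset[of ?S])
  finally show ?thesis .
qed

lemma evalmonoG_zero [simp]: "evalmonoG g 0 x = 1"
  by (simp add: evalmonoG_def)

lemma evalpG_superset:
  assumes "finite S" "Poly_Mapping.keys P \<subseteq> S"
  shows "evalpG g P x = (\<Sum>mo\<in>S. Poly_Mapping.lookup P mo * evalmonoG g mo x)"
  unfolding evalpG_def
  by (rule sum.mono_neutral_left) (use assms in \<open>auto simp: in_keys_iff\<close>)

lemma evalpG_add: "evalpG g (P + Q) x = evalpG g P x + evalpG g Q x"
proof -
  let ?S = "Poly_Mapping.keys P \<union> Poly_Mapping.keys Q"
  have "evalpG g (P + Q) x = (\<Sum>mo\<in>?S. Poly_Mapping.lookup (P+Q) mo * evalmonoG g mo x)"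
    by (rule evalpG_superset) (simp_all add: keys_add)
  also have "\<dots> = evalpG g P x + evalpG g Q x"
    by (simp add: lookup_add distrib_right sum.distrib evalpG_superset[of ?S])
  finally show ?thesis .
qed

lemma evalpG_zero [simp]: "evalpG g 0 x = 0"
  by (simp add: evalpG_def)

lemma evalpG_single [simp]: "evalpG g (Poly_Mapping.single a c) x = c * evalmonoG g a x"
  by (simp add: evalpG_def)

lemma evalpG_sum: "evalpG g (sum F A) x = (\<Sum>i\<in>A. evalpG g (F i) x)"
  by (induction A rule: infinite_finite_induct) (auto simp: evalpG_add)

lemma pm_expansion:
  fixes P :: "('a \<Rightarrow>\<^sub>0 'b::comm_monoid_add)"
  shows "P = (\<Sum>a\<in>Poly_Mapping.keys P. Poly_Mapping.single a (Poly_Mapping.lookup P a))"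
proof -
  have *: "finite I \<Longrightarrow> Poly_Mapping.lookup (\<Sum>a\<in>I. Poly_Mapping.single a (Poly_Mapping.lookup P a)) j =
            (if j \<in> I then Poly_Mapping.lookup P j else 0)" for I j
    by (induction I rule: finite_induct) (auto simp: lookup_single lookup_add when_def)
  show ?thesis
    by (rule poly_mapping_eqI) (fastforce simp add: in_keys_iff *)
qed

lemma evalpG_mult: "evalpG g (P * Q) x = evalpG g P x * evalpG g Q x"
proof -
  let ?A = "Poly_Mapping.keys P" and ?B = "Poly_Mapping.keys Q"
  have "P * Q = (\<Sum>a\<in>?A. Poly_Mapping.single a (Poly_Mapping.lookup P a)) *
                (\<Sum>b\<in>?B. Poly_Mapping.single b (Poly_Mapping.lookup Q b))"
    using pm_expansion[of P] pm_expansion[of Q] by simp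
  also have "\<dots> = (\<Sum>a\<in>?A. \<Sum>b\<in>?B. Poly_Mapping.single (a+b) (Poly_Mapping.lookup P a * Poly_Mapping.lookup Q b))"
    by (simp add: sum_distrib_left sum_distrib_right mult_single) (rule sum.swap)
  finally have "evalpG g (P * Q) x = (\<Sum>a\<in>?A. \<Sum>b\<in>?B. Poly_Mapping.lookup P a * Poly_Mapping.lookup Q b * (evalmonoG g a x * evalmonoG g b x))"
    by (simp add: evalpG_sum evalmonoG_add)
  also have "\<dots> = evalpG g P x * evalpG g Q x"
    by (simp add: evalpG_def sum_product mult_ac)
  finally show ?thesis .
qed

lemma evalpG_const: "evalpG g (Poly_Mapping.single 0 c) x = c"
  by simp

definition wdegs :: "(nat \<Rightarrow> nat) \<Rightarrow> (nat \<Rightarrow>\<^sub>0 nat) \<Rightarrow> nat" where "wdegs = wdeg"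

lemma wdeg_superset:
  assumes "finite S" "Poly_Mapping.keys a \<subseteq> S"
  shows "wdeg w a = (\<Sum>k\<in>S. Poly_Mapping.lookup a k * w k)"
  unfolding wdeg_def
  by (rule sum.mono_neutral_left) (use assms in \<open>auto simp: in_keys_iff\<close>)

lemma wdeg_add: "wdeg w (a + b) = wdeg w a + wdeg w b"
proof -
  let ?S = "Poly_Mapping.keys a \<union> Poly_Mapping.keys b"
  have "wdeg w (a + b) = (\<Sum>k\<in>?S. Poly_Mapping.lookup (a+b) k * w k)"
    by (rule wdeg_superset) (simp_all add: keys_add)
  also have "\<dots> = wdeg w a + wdeg w b"
    by (simp add: lookup_add distrib_right sum.distrib wdeg_superset[of ?S])
  finally show ?thesis .
qed

lemma wdeg_zero [simp]: "wdeg w 0 = 0" by (simp add: wdeg_def)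

lemma keys_mult_wdeg:
  assumes "\<forall>a\<in>Poly_Mapping.keys P. wdeg w a \<le> m" "\<forall>a\<in>Poly_Mapping.keys Q. wdeg w a \<le> n"
  shows "\<forall>a\<in>Poly_Mapping.keys (P * Q). wdeg w a \<le> m + n"
  using keys_mult[of P Q] assms by (force simp: wdeg_add intro: add_mono)

lemma keys_add_wdeg:
  assumes "\<forall>a\<in>Poly_Mapping.keys P. wdeg w a \<le> m" "\<forall>a\<in>Poly_Mapping.keys Q. wdeg w a \<le> m"
  shows "\<forall>a\<in>Poly_Mapping.keys (P + Q). wdeg w a \<le> m"
  using keys_add[of P Q] assms by blast

lemma evalpG_closure:
  fixes C :: "('x \<Rightarrow> real) \<Rightarrow> nat \<Rightarrow> bool"
  assumes const: "\<And>c. C (\<lambda>x. c) 0"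
    and mult: "\<And>f h a b. C f a \<Longrightarrow> C h b \<Longrightarrow> C (\<lambda>x. f x * h x) (a + b)"
    and add: "\<And>f h a. C f a \<Longrightarrow> C h a \<Longrightarrow> C (\<lambda>x. f x + h x) a"
    and mono: "\<And>f a b. C f a \<Longrightarrow> a \<le> b \<Longrightarrow> C f b"
    and gen: "\<And>k. C (g k) (w k)"
    and deg: "\<forall>a\<in>Poly_Mapping.keys P. wdeg w a \<le> n"
  shows "C (\<lambda>x. evalpG g P x) n"
proof -
  have pw: "C (\<lambda>x. f x ^ e) (e * a)" if "C f a" for f e a
  proof (induction e)
    case 0 then show ?case using const by simp
  next
    case (Suc e)
    from mult[OF that Suc] show ?case by (simp add: add.commute mult.commute)
  qed
  have pr: "finite K \<Longrightarrow> C (\<lambda>x. \<Prod>k\<in>K. g k x ^ e k) (\<Sum>k\<in>K. e k * w k)" for K e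
  proof (induction K rule: finite_induct)
    case empty then show ?case using const by simp
  next
    case (insert k K)
    from mult[OF pw[OF gen[of k], of "e k"] insert(3)] insert(1,2) show ?case by simp
  qed
  have mo: "C (\<lambda>x. c * evalmonoG g a x) (wdeg w a)" for c a
    using mult[OF const[of c] pr[of "Poly_Mapping.keys a" "Poly_Mapping.lookup a"]]
    by (simp add: evalmonoG_def wdeg_def)
  have "finite M \<Longrightarrow> M \<subseteq> Poly_Mapping.keys P \<Longrightarrow>
      C (\<lambda>x. \<Sum>a\<in>M. Poly_Mapping.lookup P a * evalmonoG g a x) n" for M
  proof (induction M rule: finite_induct)
    case empty then show ?case using mono[OF const[of 0]] by simp
  next
    case (insert a M)
    have "C (\<lambda>x. Poly_Mapping.lookup P a * evalmonoG g a x) n"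
      using mono[OF mo] deg insert(4) by blast
    from add[OF this insert(3)] insert show ?case by simp
  qed
  then show ?thesis unfolding evalpG_def by simp
qed



lemma filt_evalpG: "filt g w n = {f. \<exists>P. (\<forall>a\<in>Poly_Mapping.keys P. wdeg w a \<le> n) \<and> (\<forall>xs\<in>YY. f xs = evalpG g P xs)}"
  by (simp add: filt_def evalp_G)

lemma filt_const: "(\<lambda>x. c) \<in> filt g w 0"
  unfolding filt_evalpG
  by (rule CollectI, rule exI[of _ "Poly_Mapping.single 0 c"]) auto

lemma filt_mult:
  assumes "f \<in> filt g w a" "h \<in> filt g w b" shows "(\<lambda>x. f x * h x) \<in> filt g w (a + b)"
proof -
  obtain P where P: "\<forall>a'\<in>Poly_Mapping.keys P. wdeg w a' \<le> a" "\<forall>xs\<in>YY. f xs = evalpG g P xs"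
    using assms(1) unfolding filt_evalpG by blast
  obtain Q where Q: "\<forall>a'\<in>Poly_Mapping.keys Q. wdeg w a' \<le> b" "\<forall>xs\<in>YY. h xs = evalpG g Q xs"
    using assms(2) unfolding filt_evalpG by blast
  have "\<forall>a'\<in>Poly_Mapping.keys (P*Q). wdeg w a' \<le> a + b" using keys_mult_wdeg[OF P(1) Q(1)] .
  moreover have "\<forall>xs\<in>YY. f xs * h xs = evalpG g (P*Q) xs" using P(2) Q(2) by (simp add: evalpG_mult)
  ultimately show ?thesis unfolding filt_evalpG by blast
qed

lemma filt_add:
  assumes "f \<in> filt g w a" "h \<in> filt g w a" shows "(\<lambda>x. f x + h x) \<in> filt g w a"
proof -
  obtain P where P: "\<forall>a'\<in>Poly_Mapping.keys P. wdeg w a' \<le> a" "\<forall>xs\<in>YY. f xs = evalpG g P xs"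
    using assms(1) unfolding filt_evalpG by blast
  obtain Q where Q: "\<forall>a'\<in>Poly_Mapping.keys Q. wdeg w a' \<le> a" "\<forall>xs\<in>YY. h xs = evalpG g Q xs"
    using assms(2) unfolding filt_evalpG by blast
  have "\<forall>a'\<in>Poly_Mapping.keys (P+Q). wdeg w a' \<le> a" using keys_add_wdeg[OF P(1) Q(1)] .
  moreover have "\<forall>xs\<in>YY. f xs + h xs = evalpG g (P+Q) xs" using P(2) Q(2) by (simp add: evalpG_add)
  ultimately show ?thesis unfolding filt_evalpG by blast
qed

lemma filt_mono: "f \<in> filt g w a \<Longrightarrow> a \<le> b \<Longrightarrow> f \<in> filt g w b"
  unfolding filt_def by (auto intro: order_trans)

lemma filt_gen: "g k \<in> filt g w (w k)"
  unfolding filt_evalpG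
  apply (rule CollectI, rule exI[of _ "Poly_Mapping.single (Poly_Mapping.single k 1) 1"])
  apply (auto simp: wdeg_def evalmonoG_def)
  done

lemma filt_cong: "f \<in> filt g w a \<Longrightarrow> (\<And>xs. xs \<in> YY \<Longrightarrow> f' xs = f xs) \<Longrightarrow> f' \<in> filt g w a"
  unfolding filt_def by auto

lemma filt_subst:
  assumes "\<And>k. g k \<in> filt h v (w k)"
  shows "filt g w n \<subseteq> filt h v n"
proof
  fix f assume "f \<in> filt g w n"
  then obtain P where P: "\<forall>a\<in>Poly_Mapping.keys P. wdeg w a \<le> n" "\<forall>xs\<in>YY. f xs = evalpG g P xs"
    unfolding filt_evalpG by auto
  have "(\<lambda>x. evalpG g P x) \<in> filt h v n"
    apply (rule evalpG_closure[where C="\<lambda>f a. f \<in> filt h v a" and w=w])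
         apply (rule filt_const)
        apply (erule (1) filt_mult)
       apply (erule (1) filt_add)
      apply (erule (1) filt_mono)
     apply (rule assms)
    apply (rule P(1))
    done
  then show "f \<in> filt h v n" by (rule filt_cong) (use P in auto)
qed

lemma filt_sum: "finite A \<Longrightarrow> (\<And>i. i \<in> A \<Longrightarrow> F i \<in> filt g w a) \<Longrightarrow> (\<lambda>x. \<Sum>i\<in>A. F i x) \<in> filt g w a"
proof (induction A rule: finite_induct)
  case empty then show ?case using filt_mono[OF filt_const[of 0]] by simp
next
  case (insert i A)
  then show ?case using filt_add[of "F i" g w a "\<lambda>x. \<Sum>i\<in>A. F i x"] by simp
qed

lemma filt_scale: assumes "f \<in> filt g w a" shows "(\<lambda>x. c * f x) \<in> filt g w a"
  using filt_mult[OF filt_const[of c] assms] by simp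

definition evalY :: "(nat \<Rightarrow> real) \<Rightarrow> rpoly \<Rightarrow> real" where
  "evalY y P = evalpG (\<lambda>k y. y k) P y"

definition repr :: "((nat \<Rightarrow> real) \<Rightarrow> real) \<Rightarrow> bool" where
  "repr f \<longleftrightarrow> (\<exists>P. \<forall>y. f y = evalY y P)"

lemma evalY_mult: "evalY y (P * Q) = evalY y P * evalY y Q"
  unfolding evalY_def by (rule evalpG_mult)
lemma evalY_add: "evalY y (P + Q) = evalY y P + evalY y Q"
  unfolding evalY_def by (rule evalpG_add)

lemma evalpG_subst:
  assumes "\<And>k. repr (g k)"
  shows "\<exists>P'. \<forall>y. evalY y P' = evalpG g P y"
proof -
  have "repr (\<lambda>x. evalpG g P x)"
  proof (rule evalpG_closure[where C="\<lambda>f a. repr f" and w="\<lambda>_. 0" and n=0])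
    show "repr (\<lambda>x. c)" for c
      proof -
      have "\<forall>y. c = evalY y (Poly_Mapping.single 0 c)" by (simp add: evalY_def)
      then show ?thesis unfolding repr_def by blast
    qed
    show "repr (\<lambda>x. f x * h x)" if rf: "repr f" and rh: "repr h" for f h
    proof -
      obtain P Q where "\<forall>y. f y = evalY y P" "\<forall>y. h y = evalY y Q" using rf rh unfolding repr_def by blast
      then have "\<forall>y. f y * h y = evalY y (P * Q)" by (simp add: evalY_mult)
      then show ?thesis unfolding repr_def by blast
    qed
    show "repr (\<lambda>x. f x + h x)" if rf: "repr f" and rh: "repr h" for f h
    proof -
      obtain P Q where "\<forall>y. f y = evalY y P" "\<forall>y. h y = evalY y Q" using rf rh unfolding repr_def by blast
      then have "\<forall>y. f y + h y = evalY y (P + Q)" by (simp add: evalY_add)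
      then show ?thesis unfolding repr_def by blast
    qed
    show "repr f" if "repr f" for f using that .
    show "repr (g k)" for k by (rule assms)
    show "\<forall>a\<in>Poly_Mapping.keys P. wdeg (\<lambda>_. 0) a \<le> 0" by (simp add: wdeg_def)
  qed
  then obtain P' where "\<forall>y. evalpG g P y = evalY y P'" unfolding repr_def by blast
  then have "\<forall>y. evalY y P' = evalpG g P y" by simp
  then show ?thesis by blast
qed


lemma evalY_lin: "evalY y (Poly_Mapping.single (Poly_Mapping.single j 1) c) = c * y j"
  by (simp add: evalY_def evalmonoG_def)

lemma evalY_lin': "evalY y (Poly_Mapping.single (Poly_Mapping.single j (Suc 0)) c) = c * y j"
  by (simp add: evalY_def evalmonoG_def)

definition vars :: "rpoly \<Rightarrow> nat set" where
  "vars P = (\<Union>a\<in>Poly_Mapping.keys P. Poly_Mapping.keys a)"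

lemma finite_vars: "finite (vars P)"
  by (simp add: vars_def)

lemma evalpG_cong_vars:
  assumes "\<And>k. k \<in> vars P \<Longrightarrow> g k x = g' k x'"
  shows "evalpG g P x = evalpG g' P x'"
proof -
  have h: "\<And>a k. a \<in> Poly_Mapping.keys P \<Longrightarrow> k \<in> Poly_Mapping.keys a \<Longrightarrow> g k x = g' k x'"
    using assms by (auto simp: vars_def)
  show ?thesis unfolding evalpG_def evalmonoG_def
    by (intro sum.cong refl arg_cong2[where f="(*)"] prod.cong) (metis h)
qed

lemma vars_bound: "\<exists>n. \<forall>k\<in>vars P. k < n"
proof -
  obtain n where "vars P \<subseteq> {..<n}" using finite_nat_bounded[OF finite_vars] by blast
  then show ?thesis by auto
qed


lemma repr_linear: "repr (\<lambda>y. \<Sum>j\<in>A. c j * y j)"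
proof (cases "finite A")
  case True
  then show ?thesis
  proof (induction A rule: finite_induct)
    case empty
    show ?case unfolding repr_def evalY_def by (intro exI[of _ "0::rpoly"] allI) simp
  next
    case (insert j A)
    from insert(3) obtain P where P: "\<And>y. (\<Sum>j\<in>A. c j * y j) = evalY y P" unfolding repr_def by blast
    have "(\<Sum>j\<in>insert j A. c j * y j) = evalY y (P + Poly_Mapping.single (Poly_Mapping.single j 1) (c j))" for y
      using insert(1,2) by (simp add: evalY_add evalY_lin evalY_lin' P[symmetric])
    then show ?case unfolding repr_def by (intro exI[of _ "P + Poly_Mapping.single (Poly_Mapping.single j 1) (c j)"] allI)
  qed
next
  case False
  show ?thesis unfolding repr_def evalY_def by (intro exI[of _ "0::rpoly"] allI) (simp add: False)
qed



definition rowsum :: "real \<Rightarrow> nat \<Rightarrow> nat list \<Rightarrow> nat \<Rightarrow> real" where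
  "rowsum \<theta> m xs r =
     (if r = 0 \<or> part_at xs (r+1) < part_at xs r then (real (part_at xs (r+1)) - \<theta> * real r)^m else 0)
   - (if 1 \<le> r \<and> part_at xs (r+1) < part_at xs r then (real (part_at xs r) - \<theta> * real r)^m else 0)"

lemma pbold_rows: "pbold \<theta> m xs = (\<Sum>r\<le>length xs. rowsum \<theta> m xs r)"
proof -
  let ?L = "length xs"
  have inner: "inner_corners xs = (\<lambda>r. (r, part_at xs (r+1))) ` {r\<in>{..?L}. r = 0 \<or> part_at xs (r+1) < part_at xs r}"
    by (auto simp: inner_corners_def image_def)
  have outer: "outer_corners xs = (\<lambda>r. (r, part_at xs r)) ` {r\<in>{..?L}. 1 \<le> r \<and> part_at xs (r+1) < part_at xs r}"
    by (auto simp: outer_corners_def image_def)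
  have i1: "(\<Sum>c\<in>inner_corners xs. kcoord \<theta> c ^ m) =
     (\<Sum>r\<in>{r\<in>{..?L}. r = 0 \<or> part_at xs (r+1) < part_at xs r}. (real (part_at xs (r+1)) - \<theta> * real r)^m)"
    unfolding inner by (subst sum.reindex) (auto simp: inj_on_def kcoord_def)
  have o1: "(\<Sum>c\<in>outer_corners xs. kcoord \<theta> c ^ m) =
     (\<Sum>r\<in>{r\<in>{..?L}. 1 \<le> r \<and> part_at xs (r+1) < part_at xs r}. (real (part_at xs r) - \<theta> * real r)^m)"
    unfolding outer by (subst sum.reindex) (auto simp: inj_on_def kcoord_def)
  show ?thesis
    unfolding pbold_def i1 o1 rowsum_def sum_subtractf
    by (simp only: sum.inter_filter[OF finite_atMost])
qed

lemma part_at_snoc: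
  "part_at (xs @ [c]) i = (if i = length xs + 1 then c else part_at xs i)"
  by (auto simp: part_at_def nth_append)

lemma part_at_beyond: "i > length xs \<Longrightarrow> part_at xs i = 0"
  by (simp add: part_at_def)

lemma part_at_zero [simp]: "part_at xs 0 = 0"
  by (simp add: part_at_def)

lemma pstar_snoc:
  "pstar \<theta> j (xs @ [c]) = pstar \<theta> j xs + ((real c - \<theta> * real (length xs + 1))^j - (- \<theta> * real (length xs + 1))^j)"
proof -
  have "pstar \<theta> j (xs @ [c]) = (\<Sum>i = 1..length xs + 1.
      (real (part_at (xs@[c]) i) - \<theta> * real i) ^ j - (- \<theta> * real i) ^ j)"
    by (simp add: pstar_def)
  also have "\<dots> = (\<Sum>i = 1..length xs. (real (part_at (xs@[c]) i) - \<theta> * real i) ^ j - (- \<theta> * real i) ^ j)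
     + ((real c - \<theta> * real (length xs + 1))^j - (- \<theta> * real (length xs + 1))^j)"
    by (simp add: part_at_snoc)
  also have "(\<Sum>i = 1..length xs. (real (part_at (xs@[c]) i) - \<theta> * real i) ^ j - (- \<theta> * real i) ^ j)
     = pstar \<theta> j xs"
    unfolding pstar_def by (rule sum.cong) (auto simp: part_at_snoc)
  finally show ?thesis .
qed

lemma is_partition_snoc:
  assumes "is_partition (xs @ [c])"
  shows "is_partition xs" "c > 0" "xs \<noteq> [] \<Longrightarrow> c \<le> part_at xs (length xs)"
    "xs \<noteq> [] \<Longrightarrow> part_at xs (length xs) > 0"
proof -
  have s: "sorted_wrt (\<ge>) xs" "\<forall>x\<in>set xs. c \<le> x" "0 < c" "0 \<notin> set xs"
    using assms by (auto simp: is_partition_def sorted_wrt_append)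
  show "is_partition xs" using s by (simp add: is_partition_def)
  show "c > 0" using s by simp
  assume ne: "xs \<noteq> []"
  then have mem: "xs ! (length xs - 1) \<in> set xs" by (simp add: nth_mem)
  have pa: "part_at xs (length xs) = xs ! (length xs - 1)"
    using ne by (simp add: part_at_def Suc_le_eq)
  show "c \<le> part_at xs (length xs)" using s mem pa by simp
  show "part_at xs (length xs) > 0" using s mem pa by (metis gr0I)
qed

lemma binom_diff:
  fixes a \<theta> :: real
  shows "(a + \<theta>)^m - a^m = (\<Sum>j<m. real (m choose j) * \<theta>^(m-j) * a^j)"
proof -
  have "(a + \<theta>)^m = (\<Sum>j\<le>m. real (m choose j) * a^j * \<theta>^(m-j))"
    by (rule binomial_ring)
  also have "\<dots> = (\<Sum>j<Suc m. real (m choose j) * a^j * \<theta>^(m-j))"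
    by (simp add: lessThan_Suc_atMost)
  also have "\<dots> = (\<Sum>j<m. real (m choose j) * \<theta>^(m-j) * a^j) + a^m"
    by (simp add: mult_ac)
  finally show ?thesis by simp
qed

lemma pbold_pstar:
  assumes "is_partition xs" "m \<ge> 1"
  shows "pbold \<theta> m xs = (\<Sum>j<m. real (m choose j) * \<theta>^(m-j) * pstar \<theta> j xs)"
  using assms(1)
proof (induction xs rule: rev_induct)
  case Nil
  have "pbold \<theta> m [] = 0"
    using assms(2) by (simp add: pbold_rows rowsum_def part_at_def)
  moreover have "pstar \<theta> j [] = 0" for j by (simp add: pstar_def)
  ultimately show ?case by simp
next
  case (snoc c xs)
  let ?L = "length xs"
  note pp = is_partition_snoc[OF snoc.prems]
  have IH: "pbold \<theta> m xs = (\<Sum>j<m. real (m choose j) * \<theta>^(m-j) * pstar \<theta> j xs)"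
    using snoc.IH pp(1) .
  define a where "a = real c - \<theta> * real (?L + 1)"
  define b where "b = - \<theta> * real (?L + 1)"
  have rs_eq: "rowsum \<theta> m (xs@[c]) r = rowsum \<theta> m xs r" if "r < ?L" for r
    using that by (simp add: rowsum_def part_at_snoc)
  have sum_split: "(\<Sum>r\<le>Suc n. f r) = (\<Sum>r<n. f r) + f n + f (Suc n)" for f :: "nat \<Rightarrow> real" and n
    by (simp add: lessThan_Suc_atMost[symmetric])
  have sum_split2: "(\<Sum>r\<le>n. f r) = (\<Sum>r<n. f r) + f n" for f :: "nat \<Rightarrow> real" and n
    by (simp add: lessThan_Suc_atMost[symmetric])
  have "pbold \<theta> m (xs@[c]) = (\<Sum>r<?L. rowsum \<theta> m (xs@[c]) r) + rowsum \<theta> m (xs@[c]) ?L + rowsum \<theta> m (xs@[c]) (Suc ?L)"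
    by (simp only: pbold_rows length_append_singleton sum_split)
  also have "(\<Sum>r<?L. rowsum \<theta> m (xs@[c]) r) = (\<Sum>r<?L. rowsum \<theta> m xs r)"
    by (rule sum.cong) (auto simp: rs_eq)
  finally have A1: "pbold \<theta> m (xs@[c]) = (\<Sum>r<?L. rowsum \<theta> m xs r) + rowsum \<theta> m (xs@[c]) ?L + rowsum \<theta> m (xs@[c]) (Suc ?L)" .
  have A0: "pbold \<theta> m xs = (\<Sum>r<?L. rowsum \<theta> m xs r) + rowsum \<theta> m xs ?L"
    by (simp only: pbold_rows sum_split2)
  have A: "pbold \<theta> m (xs@[c]) = pbold \<theta> m xs - rowsum \<theta> m xs ?L + rowsum \<theta> m (xs@[c]) ?L + rowsum \<theta> m (xs@[c]) (Suc ?L)"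
    using A0 A1 by linarith
  have B: "- rowsum \<theta> m xs ?L + rowsum \<theta> m (xs@[c]) ?L + rowsum \<theta> m (xs@[c]) (Suc ?L)
      = ((a + \<theta>)^m - a^m) - ((b + \<theta>)^m - b^m)"
  proof (cases "xs = []")
    case True
    then show ?thesis using pp(2) assms(2) by (simp add: rowsum_def part_at_def a_def b_def algebra_simps)
  next
    case False
    note ne = False
    then have L1: "?L \<ge> 1" by (cases xs) auto
    have pL: "part_at xs ?L > 0" "c \<le> part_at xs ?L" using pp False by auto
    have eab: "a + \<theta> = real c - \<theta> * real ?L" "b + \<theta> = - \<theta> * real ?L"
      by (simp_all add: a_def b_def algebra_simps)
    show ?thesis
    proof (cases "c < part_at xs ?L")
      case True
      then show ?thesis using L1 pL pp(2) unfolding eab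
        by (simp add: rowsum_def part_at_snoc part_at_beyond a_def b_def algebra_simps)
    next
      case False
      then have "part_at xs ?L = c" using pL by simp
      then show ?thesis using L1 pL pp(2) ne unfolding eab
        by (simp add: rowsum_def part_at_snoc part_at_beyond a_def b_def algebra_simps)
    qed
  qed
  have C: "(\<Sum>j<m. real (m choose j) * \<theta>^(m-j) * pstar \<theta> j (xs@[c]))
     = (\<Sum>j<m. real (m choose j) * \<theta>^(m-j) * pstar \<theta> j xs) + (\<Sum>j<m. real (m choose j) * \<theta>^(m-j) * a^j)
       - (\<Sum>j<m. real (m choose j) * \<theta>^(m-j) * b^j)"
    by (simp add: pstar_snoc a_def b_def algebra_simps sum.distrib sum_subtractf)
  show ?case using A B C IH by (simp add: binom_diff)
qed



lemma pstar_0: "pstar \<theta> 0 xs = 0"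
  by (simp add: pstar_def)

lemma pbold_pstar_YY: "xs \<in> YY \<Longrightarrow> m \<ge> 1 \<Longrightarrow>
   pbold \<theta> m xs = (\<Sum>j<m. real (m choose j) * \<theta>^(m-j) * pstar \<theta> j xs)"
  by (rule pbold_pstar) (simp_all add: YY_def)

lemma zero_in_filt: "(\<lambda>x. 0) \<in> filt g w a"
  using filt_mono[OF filt_const[of 0]] by simp

lemma pstar_in_A: "pstar \<theta> j \<in> Afilt \<theta> j"
proof (cases j)
  case 0
  then show ?thesis unfolding Afilt_def by (rule_tac filt_cong[OF zero_in_filt]) (simp add: pstar_0)
next
  case (Suc k)
  then show ?thesis unfolding Afilt_def using filt_gen[of "\<lambda>k. pstar \<theta> (k + 1)" k "\<lambda>k. k + 1"] by simp
qed

lemma pbold_in_A: "pbold \<theta> (k+2) \<in> Afilt \<theta> (k+1)"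
proof -
  have "(\<lambda>xs. \<Sum>j<k+2. real ((k+2) choose j) * \<theta>^(k+2-j) * pstar \<theta> j xs) \<in> Afilt \<theta> (k+1)"
    unfolding Afilt_def
  proof (rule filt_sum)
    fix j assume "j \<in> {..<k+2}"
    then have "j \<le> k + 1" by simp
    then have "pstar \<theta> j \<in> filt (\<lambda>k. pstar \<theta> (k + 1)) (\<lambda>k. k + 1) (k+1)"
      using filt_mono pstar_in_A[of \<theta> j] unfolding Afilt_def by blast
    then show "(\<lambda>xs. real ((k+2) choose j) * \<theta>^(k+2-j) * pstar \<theta> j xs) \<in> filt (\<lambda>k. pstar \<theta> (k + 1)) (\<lambda>k. k + 1) (k+1)"
      using filt_scale[of "pstar \<theta> j" _ _ _ "real ((k+2) choose j) * \<theta>^(k+2-j)"] by (simp add: mult.assoc)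
  qed simp
  then show ?thesis unfolding Afilt_def
    by (rule filt_cong) (simp add: pbold_pstar_YY)
qed

lemma pstar_in_P:
  assumes "\<theta> \<noteq> 0"
  shows "pstar \<theta> j \<in> Pfilt \<theta> j"
proof (induction j rule: less_induct)
  case (less j)
  show ?case
  proof (cases j)
    case 0
    then show ?thesis unfolding Pfilt_def by (rule_tac filt_cong[OF zero_in_filt]) (simp add: pstar_0)
  next
    case (Suc k)
    let ?g = "\<lambda>k. pbold \<theta> (k + 2)" and ?w = "\<lambda>k::nat. k + 1"
    have c: "real ((k+2) choose (k+1)) * \<theta>^(k+2-(k+1)) = real (k+2) * \<theta>"
      by (simp add: binomial_Suc_n)
    have cnz: "real (k+2) * \<theta> \<noteq> 0" using assms by simp
    have gen: "pbold \<theta> (k+2) \<in> filt ?g ?w (k+1)"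
      using filt_gen[of ?g k ?w] by simp
    have low: "(\<lambda>xs. \<Sum>j<k+1. (- (real ((k+2) choose j) * \<theta>^(k+2-j))) * pstar \<theta> j xs) \<in> filt ?g ?w (k+1)"
    proof (rule filt_sum)
      fix i assume "i \<in> {..<k+1}"
      then have "i < j" "i \<le> k + 1" using Suc by auto
      then have "pstar \<theta> i \<in> filt ?g ?w (k+1)"
        using less.IH[of i] filt_mono unfolding Pfilt_def by blast
      then show "(\<lambda>xs. (- (real ((k+2) choose i) * \<theta>^(k+2-i))) * pstar \<theta> i xs) \<in> filt ?g ?w (k+1)"
        by (rule filt_scale)
    qed simp
    have "(\<lambda>xs. (1 / (real (k+2) * \<theta>)) * (pbold \<theta> (k+2) xs + (\<Sum>j<k+1. (- (real ((k+2) choose j) * \<theta>^(k+2-j))) * pstar \<theta> j xs))) \<in> filt ?g ?w (k+1)"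
      by (rule filt_scale, rule filt_add[OF gen low])
    then have "pstar \<theta> (k+1) \<in> filt ?g ?w (k+1)"
    proof (rule filt_cong)
      fix xs assume xs: "xs \<in> YY"
      have "pbold \<theta> (k+2) xs = (\<Sum>j<Suc (k+1). real ((k+2) choose j) * \<theta>^(k+2-j) * pstar \<theta> j xs)"
        using pbold_pstar_YY[OF xs, of "k+2" \<theta>] by simp
      also have "\<dots> = (\<Sum>j<k+1. real ((k+2) choose j) * \<theta>^(k+2-j) * pstar \<theta> j xs) + real (k+2) * \<theta> * pstar \<theta> (k+1) xs"
        by (simp only: sum.lessThan_Suc c)
      finally show "pstar \<theta> (k+1) xs = (1 / (real (k+2) * \<theta>)) * (pbold \<theta> (k+2) xs + (\<Sum>j<k+1. (- (real ((k+2) choose j) * \<theta>^(k+2-j))) * pstar \<theta> j xs))"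
        using cnz by (simp add: sum_negf field_simps)
    qed
    then show ?thesis using Suc unfolding Pfilt_def by simp
  qed
qed

lemma Afilt_eq_Pfilt:
  assumes "\<theta> \<noteq> 0"
  shows "Afilt \<theta> n = Pfilt \<theta> n"
proof
  show "Afilt \<theta> n \<subseteq> Pfilt \<theta> n"
    unfolding Afilt_def Pfilt_def
    by (rule filt_subst) (use pstar_in_P[OF assms] in \<open>simp add: Pfilt_def\<close>)
  show "Pfilt \<theta> n \<subseteq> Afilt \<theta> n"
    unfolding Afilt_def Pfilt_def
    by (rule filt_subst) (use pbold_in_A in \<open>simp add: Afilt_def\<close>)
qed



definition cpoly :: "((nat \<Rightarrow> real) \<Rightarrow> real) \<Rightarrow> nat \<Rightarrow> bool" where
  "cpoly f d \<longleftrightarrow> (\<forall>j x. \<exists>q. degree q \<le> d \<and> (\<forall>t. f (x(j := t)) = poly q t))"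

lemma cpoly_const: "cpoly (\<lambda>x. c) 0"
  unfolding cpoly_def by (auto intro!: exI[of _ "[:c:]"])

lemma cpoly_coord: "cpoly (\<lambda>x. x i) 1"
  unfolding cpoly_def
proof (intro allI)
  fix j and x :: "nat \<Rightarrow> real"
  show "\<exists>q. degree q \<le> 1 \<and> (\<forall>t. (x(j:=t)) i = poly q t)"
  proof (cases "i = j")
    case True then show ?thesis by (intro exI[of _ "[:0,1:]"]) auto
  next
    case False then show ?thesis by (intro exI[of _ "[:x i:]"]) auto
  qed
qed

lemma cpoly_mult:
  assumes f: "cpoly f a" and h: "cpoly h b"
  shows "cpoly (\<lambda>x. f x * h x) (a+b)"
  unfolding cpoly_def
proof (intro allI)
  fix j and x :: "nat \<Rightarrow> real"
  obtain q1 where q1: "degree q1 \<le> a" "\<forall>t. f (x(j:=t)) = poly q1 t" using f unfolding cpoly_def by blast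
  obtain q2 where q2: "degree q2 \<le> b" "\<forall>t. h (x(j:=t)) = poly q2 t" using h unfolding cpoly_def by blast
  have "degree (q1 * q2) \<le> a + b" using degree_mult_le[of q1 q2] q1(1) q2(1) by linarith
  then show "\<exists>q. degree q \<le> a + b \<and> (\<forall>t. f (x(j:=t)) * h (x(j:=t)) = poly q t)"
    using q1(2) q2(2) by (intro exI[of _ "q1 * q2"]) simp
qed

lemma cpoly_add:
  assumes f: "cpoly f a" and h: "cpoly h a"
  shows "cpoly (\<lambda>x. f x + h x) a"
  unfolding cpoly_def
proof (intro allI)
  fix j and x :: "nat \<Rightarrow> real"
  obtain q1 where q1: "degree q1 \<le> a" "\<forall>t. f (x(j:=t)) = poly q1 t" using f unfolding cpoly_def by blast
  obtain q2 where q2: "degree q2 \<le> a" "\<forall>t. h (x(j:=t)) = poly q2 t" using h unfolding cpoly_def by blast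
  have "degree (q1 + q2) \<le> a" using degree_add_le q1(1) q2(1) by blast
  then show "\<exists>q. degree q \<le> a \<and> (\<forall>t. f (x(j:=t)) + h (x(j:=t)) = poly q t)"
    using q1(2) q2(2) by (intro exI[of _ "q1 + q2"]) simp
qed

lemma cpoly_mono: "cpoly f a \<Longrightarrow> a \<le> b \<Longrightarrow> cpoly f b"
  unfolding cpoly_def by (meson order_trans)

lemma cpoly_sum: "finite A \<Longrightarrow> (\<And>i. i \<in> A \<Longrightarrow> cpoly (F i) a) \<Longrightarrow> cpoly (\<lambda>x. \<Sum>i\<in>A. F i x) a"
proof (induction A rule: finite_induct)
  case empty then show ?case using cpoly_mono[OF cpoly_const[of 0]] by simp
next
  case (insert i A)
  then show ?case using cpoly_add[of "F i" a "\<lambda>x. \<Sum>i\<in>A. F i x"] by simp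
qed

lemma cpoly_pow: "cpoly f a \<Longrightarrow> cpoly (\<lambda>x. f x ^ e) (e * a)"
proof (induction e)
  case 0 then show ?case using cpoly_const[of 1] by simp
next
  case (Suc e)
  from cpoly_mult[OF Suc(2) Suc(1)[OF Suc(2)]] show ?case by (simp add: add.commute)
qed

lemma cpoly_scale: "cpoly f a \<Longrightarrow> cpoly (\<lambda>x. c * f x) a"
  using cpoly_mult[OF cpoly_const[of c]] by fastforce

lemma cpoly_evalpG:
  assumes "\<And>k. cpoly (g k) (w k)" "\<forall>a\<in>Poly_Mapping.keys P. wdeg w a \<le> n"
  shows "cpoly (\<lambda>x. evalpG g P x) n"
  apply (rule evalpG_closure[where C=cpoly and w=w])
       apply (rule cpoly_const)
      apply (erule (1) cpoly_mult)
     apply (erule (1) cpoly_add)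
    apply (erule (1) cpoly_mono)
   apply (rule assms(1))
  apply (rule assms(2))
  done

lemma poly_zero_infinite:
  fixes q :: "real poly"
  assumes "infinite A" "\<forall>x\<in>A. poly q x = 0"
  shows "q = 0"
proof (rule ccontr)
  assume "q \<noteq> 0"
  then have "finite {x. poly q x = 0}" by (rule poly_roots_finite)
  moreover have "A \<subseteq> {x. poly q x = 0}" using assms(2) by auto
  ultimately show False using assms(1) finite_subset by blast
qed

lemma poly_zero_many:
  fixes q :: "real poly"
  assumes "finite A" "card A > degree q" "\<forall>x\<in>A. poly q x = 0"
  shows "q = 0"
  using poly_eqI_degree[of A q 0] assms by auto

lemma grid_dominant:
  fixes G :: "(nat \<Rightarrow> real) \<Rightarrow> real"
  assumes cp: "cpoly G D"
    and base: "\<And>v. (\<forall>i<N. v i \<ge> 1) \<Longrightarrow> (\<forall>i. i+1 < N \<longrightarrow> v (i+1) \<le> v i) \<Longrightarrow> G (\<lambda>i. real (v i)) = 0"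
    and dep: "\<And>x x'. (\<forall>i<N. x i = x' i) \<Longrightarrow> G x = G x'"
  shows "G x = 0"
proof -
  have claim: "j \<le> N \<Longrightarrow> \<forall>x v. (\<forall>i. j \<le> i \<longrightarrow> i < N \<longrightarrow> v i \<ge> 1 \<and> x i = real (v i)) \<longrightarrow>
       (\<forall>i. j \<le> i \<longrightarrow> i+1 < N \<longrightarrow> v (i+1) \<le> v i) \<longrightarrow> G x = 0" for j
  proof (induction j)
    case 0
    show ?case
    proof (intro allI impI)
      fix x v
      assume h1: "\<forall>i. 0 \<le> i \<longrightarrow> i < N \<longrightarrow> 1 \<le> v i \<and> x i = real (v i)"
        and h2: "\<forall>i. 0 \<le> i \<longrightarrow> i + 1 < N \<longrightarrow> v (i + 1) \<le> v i"
      have "G x = G (\<lambda>i. real (v i))" by (rule dep) (use h1 in auto)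
      also have "\<dots> = 0" by (rule base) (use h1 h2 in auto)
      finally show "G x = 0" .
    qed
  next
    case (Suc j)
    then have jN: "j < N" and IH: "\<forall>x v. (\<forall>i. j \<le> i \<longrightarrow> i < N \<longrightarrow> v i \<ge> 1 \<and> x i = real (v i)) \<longrightarrow>
       (\<forall>i. j \<le> i \<longrightarrow> i+1 < N \<longrightarrow> v (i+1) \<le> v i) \<longrightarrow> G x = 0" by auto
    show ?case
    proof (intro allI impI)
      fix x v
      assume h1: "\<forall>i. Suc j \<le> i \<longrightarrow> i < N \<longrightarrow> 1 \<le> v i \<and> x i = real (v i)"
        and h2: "\<forall>i. Suc j \<le> i \<longrightarrow> i + 1 < N \<longrightarrow> v (i + 1) \<le> v i"
      obtain q where q: "\<forall>t. G (x(j := t)) = poly q t" using cp unfolding cpoly_def by blast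
      define lo where "lo = max 1 (v (j+1))"
      have "\<forall>t\<in>real ` {lo..}. poly q t = 0"
      proof
        fix t assume "t \<in> real ` {lo..}"
        then obtain s where s: "t = real s" "s \<ge> lo" by auto
        have p1: "\<forall>i. j \<le> i \<longrightarrow> i < N \<longrightarrow> (v(j:=s)) i \<ge> 1 \<and> (x(j := real s)) i = real ((v(j:=s)) i)"
        proof (intro allI impI)
          fix i assume "j \<le> i" "i < N"
          then show "(v(j:=s)) i \<ge> 1 \<and> (x(j := real s)) i = real ((v(j:=s)) i)"
            using h1 s(2) unfolding lo_def by (cases "i = j") auto
        qed
        have p2: "\<forall>i. j \<le> i \<longrightarrow> i+1 < N \<longrightarrow> (v(j:=s)) (i+1) \<le> (v(j:=s)) i"
        proof (intro allI impI)
          fix i assume "j \<le> i" "i + 1 < N"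
          then show "(v(j:=s)) (i+1) \<le> (v(j:=s)) i"
            using h2 s(2) unfolding lo_def by (cases "i = j") auto
        qed
        have "G (x(j := real s)) = 0"
          using IH p1 p2 by blast
        then show "poly q t = 0" using q s(1) by simp
      qed
      moreover have "infinite (real ` {lo..})"
      proof
        assume "finite (real ` {lo..})"
        then have "finite {lo..}" by (rule finite_imageD) (auto simp: inj_on_def)
        then show False using infinite_Ici by blast
      qed
      ultimately have "q = 0" using poly_zero_infinite by blast
      moreover have "G x = poly q (x j)" using q[rule_format, of "x j"] by simp
      ultimately show "G x = 0" by simp
    qed
  qed
  show ?thesis using claim[of N] by force
qed

lemma grid_box:
  fixes Q :: "(nat \<Rightarrow> real) \<Rightarrow> real"
  assumes cp: "cpoly Q d"
    and base: "\<And>mm. (\<forall>i<n. mm i \<le> d) \<Longrightarrow> Q (\<lambda>i. real (mm i)) = 0"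
    and dep: "\<And>x x'. (\<forall>i<n. x i = x' i) \<Longrightarrow> Q x = Q x'"
  shows "Q m = 0"
proof -
  have claim: "j \<le> n \<Longrightarrow> \<forall>m mm. (\<forall>i. j \<le> i \<longrightarrow> i < n \<longrightarrow> mm i \<le> d \<and> m i = real (mm i)) \<longrightarrow> Q m = 0" for j
  proof (induction j)
    case 0
    show ?case
    proof (intro allI impI)
      fix m mm assume h: "\<forall>i. 0 \<le> i \<longrightarrow> i < n \<longrightarrow> mm i \<le> d \<and> m i = real (mm i)"
      have "Q m = Q (\<lambda>i. real (mm i))" by (rule dep) (use h in auto)
      also have "\<dots> = 0" by (rule base) (use h in auto)
      finally show "Q m = 0" .
    qed
  next
    case (Suc j)
    then have IH: "\<forall>m mm. (\<forall>i. j \<le> i \<longrightarrow> i < n \<longrightarrow> mm i \<le> d \<and> m i = real (mm i)) \<longrightarrow> Q m = 0" by auto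
    show ?case
    proof (intro allI impI)
      fix m mm assume h: "\<forall>i. Suc j \<le> i \<longrightarrow> i < n \<longrightarrow> mm i \<le> d \<and> m i = real (mm i)"
      obtain q where q: "degree q \<le> d" "\<forall>t. Q (m(j := t)) = poly q t" using cp unfolding cpoly_def by blast
      have "\<forall>t\<in>real ` {..d}. poly q t = 0"
      proof
        fix t assume "t \<in> real ` {..d}"
        then obtain s where s: "t = real s" "s \<le> d" by auto
        have p1: "\<forall>i. j \<le> i \<longrightarrow> i < n \<longrightarrow> (mm(j:=s)) i \<le> d \<and> (m(j := real s)) i = real ((mm(j:=s)) i)"
        proof (intro allI impI)
          fix i assume "j \<le> i" "i < n"
          then show "(mm(j:=s)) i \<le> d \<and> (m(j := real s)) i = real ((mm(j:=s)) i)"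
            using h s(2) by (cases "i = j") auto
        qed
        have "Q (m(j := real s)) = 0"
          using IH p1 by blast
        then show "poly q t = 0" using q s(1) by simp
      qed
      moreover have "card (real ` {..d}) = Suc d" by (subst card_image) (auto simp: inj_on_def)
      ultimately have "q = 0" using poly_zero_many[of "real ` {..d}" q] q(1) by simp
      moreover have "Q m = poly q (m j)" using q(2)[rule_format, of "m j"] by simp
      ultimately show "Q m = 0" by simp
    qed
  qed
  show ?thesis using claim[of n] by force
qed



lemma vandermonde_solve:
  fixes z :: "nat \<Rightarrow> real"
  shows "\<exists>w. \<forall>k<n. (\<Sum>j<n. w j * real (j+1) ^ k) = z k"
proof -
  define v where "v j = real (j+1)" for j
  have vinj: "v i = v j \<longleftrightarrow> i = j" for i j by (simp add: v_def)
  define L where "L j = smult (1 / (\<Prod>i\<in>{..<n}-{j}. (v j - v i))) (\<Prod>i\<in>{..<n}-{j}. [:- v i, 1:])" for j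
  have polyL: "poly (L j) (v i) = (if i = j then 1 else 0)" if "i < n" "j < n" for i j
  proof (cases "i = j")
    case True
    have "(\<Prod>i\<in>{..<n}-{j}. (v j - v i)) \<noteq> 0" by (auto simp: vinj)
    then show ?thesis using True by (simp add: L_def poly_prod)
  next
    case False
    have "(\<Prod>k\<in>{..<n}-{j}. poly [:- v k, 1:] (v i)) = 0"
      by (rule prod_zero) (use that False in auto)
    then show ?thesis using False by (simp add: L_def poly_prod)
  qed
  have degL: "degree (L j) \<le> n - 1" if "j < n" for j
  proof -
    have "degree (L j) \<le> degree (\<Prod>i\<in>{..<n}-{j}. [:- v i, 1:])"
      unfolding L_def by (rule degree_smult_le)
    also have "\<dots> \<le> (\<Sum>i\<in>{..<n}-{j}. degree [:- v i, 1:])"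
      by (rule degree_prod_sum_le[unfolded comp_def]) simp
    also have "\<dots> = card ({..<n}-{j})" by simp
    also have "\<dots> = n - 1" using that by simp
    finally show ?thesis .
  qed
  define w where "w j = (\<Sum>k<n. z k * coeff (L j) k)" for j
  have "(\<Sum>j<n. w j * v j ^ k') = z k'" if k': "k' < n" for k'
  proof -
    define R where "R = (\<Sum>j<n. smult (v j ^ k') (L j))"
    have "R = monom 1 k'"
    proof (rule poly_eqI_degree[of "v ` {..<n}"])
      fix x assume "x \<in> v ` {..<n}"
      then obtain i where i: "i < n" "x = v i" by auto
      have "poly R x = (\<Sum>j<n. v j ^ k' * poly (L j) (v i))" by (simp add: R_def poly_sum i(2))
      also have "\<dots> = (\<Sum>j<n. if j = i then v i ^ k' else 0)"
        by (rule sum.cong) (use i polyL in auto)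
      also have "\<dots> = v i ^ k'" using i by simp
      finally show "poly R x = poly (monom 1 k') x" using i by (simp add: poly_monom)
    next
      have c: "card (v ` {..<n}) = n" by (subst card_image) (auto simp: inj_on_def vinj)
      have "degree R \<le> n - 1"
        unfolding R_def by (rule degree_sum_le) (use degL degree_smult_le order_trans in blast)+
      then show "degree R < card (v ` {..<n})" using c k' by linarith
      show "degree (monom (1::real) k') < card (v ` {..<n})" using c k' by (simp add: degree_monom_eq)
    qed
    then have cR: "coeff R k = (if k = k' then 1 else 0)" for k by simp
    have "(\<Sum>j<n. w j * v j ^ k') = (\<Sum>j<n. \<Sum>k<n. z k * coeff (L j) k * v j ^ k')"
      by (simp add: w_def sum_distrib_right)
    also have "\<dots> = (\<Sum>k<n. z k * (\<Sum>j<n. v j ^ k' * coeff (L j) k))"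
      by (subst sum.swap) (simp add: sum_distrib_left mult_ac)
    also have "\<dots> = (\<Sum>k<n. z k * coeff R k)"
      by (simp add: R_def coeff_sum)
    also have "\<dots> = (\<Sum>k<n. if k = k' then z k else 0)" by (rule sum.cong) (simp_all add: cR)
    also have "\<dots> = z k'" using k' by simp
    finally show ?thesis .
  qed
  then show ?thesis unfolding v_def by blast
qed

lemma vandermonde_solve1:
  fixes z :: "nat \<Rightarrow> real"
  shows "\<exists>m. \<forall>k<n. (\<Sum>j<n. m j * real (j+1) ^ (k+1)) = z k"
proof -
  obtain w where w: "\<forall>k<n. (\<Sum>j<n. w j * real (j+1) ^ k) = z k" using vandermonde_solve by blast
  have "(\<Sum>j<n. (w j / real (j+1)) * real (j+1) ^ (k+1)) = (\<Sum>j<n. w j * real (j+1) ^ k)" for k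
    by (rule sum.cong) (auto simp: field_simps)
  then show ?thesis using w by (intro exI[of _ "\<lambda>j. w j / real (j+1)"]) auto
qed

section \<open>Kronecker substitution\<close>

lemma digits_bound:
  fixes B :: nat
  assumes "\<forall>k<n. f k < B"
  shows "(\<Sum>k<n. f k * B^k) < B^n"
  using assms
proof (induction n)
  case 0 then show ?case by simp
next
  case (Suc n)
  then have IH: "(\<Sum>k<n. f k * B^k) < B^n" and fn: "f n + 1 \<le> B" by auto
  have "(\<Sum>k<Suc n. f k * B^k) = (\<Sum>k<n. f k * B^k) + f n * B^n" by simp
  also have "\<dots> < B^n + f n * B^n" using IH by simp
  also have "\<dots> = (f n + 1) * B^n" by simp
  also have "\<dots> \<le> B * B^n" using fn by (rule mult_right_mono) simp
  finally show ?case by simp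
qed

lemma digits_unique:
  fixes B :: nat
  assumes "\<forall>k<n. f k < B" "\<forall>k<n. g k < B" "(\<Sum>k<n. f k * B^k) = (\<Sum>k<n. g k * B^k)"
  shows "\<forall>k<n. f k = g k"
  using assms
proof (induction n)
  case 0 then show ?case by simp
next
  case (Suc n)
  have bf: "(\<Sum>k<n. f k * B^k) < B^n" using Suc.prems(1) by (intro digits_bound) auto
  have bg: "(\<Sum>k<n. g k * B^k) < B^n" using Suc.prems(2) by (intro digits_bound) auto
  have Bn: "B^n > 0" using bf by linarith
  have eq: "(\<Sum>k<n. f k * B^k) + f n * B^n = (\<Sum>k<n. g k * B^k) + g n * B^n"
    using Suc.prems(3) by (simp only: sum.lessThan_Suc)
  have Bn0: "B^n \<noteq> 0" using Bn by simp
  have d1: "((\<Sum>k<n. f k * B^k) + f n * B^n) div B^n = f n"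
    using Bn0 bf by (simp add: div_less)
  have d2: "((\<Sum>k<n. g k * B^k) + g n * B^n) div B^n = g n"
    using Bn0 bg by (simp add: div_less)
  have fg: "f n = g n"
  proof -
    have "f n = ((\<Sum>k<n. f k * B^k) + f n * B^n) div B^n" using d1 by simp
    also have "\<dots> = ((\<Sum>k<n. g k * B^k) + g n * B^n) div B^n" by (simp only: eq)
    also have "\<dots> = g n" by (rule d2)
    finally show ?thesis .
  qed
  have "(\<Sum>k<n. f k * B^k) = (\<Sum>k<n. g k * B^k)" using eq fg by simp
  then have "\<forall>k<n. f k = g k" using Suc.prems(1,2) by (intro Suc.IH) auto
  then show ?case using fg by (auto simp: less_Suc_eq)
qed

lemma kronecker:
  assumes "\<forall>y. evalY y P = 0"
  shows "P = 0"
proof (rule ccontr)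
  assume Pnz: "P \<noteq> 0"
  obtain n where n: "\<forall>k\<in>vars P. k < n" using vars_bound by blast
  have fin: "finite (\<Union>a\<in>Poly_Mapping.keys P. Poly_Mapping.lookup a ` Poly_Mapping.keys a)" by auto
  obtain B0 where B0: "\<forall>e\<in>(\<Union>a\<in>Poly_Mapping.keys P. Poly_Mapping.lookup a ` Poly_Mapping.keys a). e < B0"
    using finite_nat_bounded[OF fin] by auto
  define B where "B = B0 + 1"
  have aB: "Poly_Mapping.lookup a k < B" if "a \<in> Poly_Mapping.keys P" for a k
  proof (cases "k \<in> Poly_Mapping.keys a")
    case True then show ?thesis using B0 that unfolding B_def by fastforce
  next
    case False then show ?thesis unfolding B_def by (simp add: in_keys_iff)
  qed
  have akeys: "Poly_Mapping.keys a \<subseteq> {..<n}" if "a \<in> Poly_Mapping.keys P" for a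
    using n that by (auto simp: vars_def)
  define d where "d a = (\<Sum>k<n. Poly_Mapping.lookup a k * B^k)" for a
  have dinj: "a = b" if "a \<in> Poly_Mapping.keys P" "b \<in> Poly_Mapping.keys P" "d a = d b" for a b
  proof (rule poly_mapping_eqI)
    fix k
    have eqk: "\<forall>k<n. Poly_Mapping.lookup a k = Poly_Mapping.lookup b k"
      by (rule digits_unique[of n _ B]) (use that aB in \<open>auto simp: d_def\<close>)
    show "Poly_Mapping.lookup a k = Poly_Mapping.lookup b k"
    proof (cases "k < n")
      case True then show ?thesis using eqk by blast
    next
      case False
      then have "k \<notin> Poly_Mapping.keys a" "k \<notin> Poly_Mapping.keys b" using akeys that by auto
      then show ?thesis by (simp add: in_keys_iff)
    qed
  qed
  define R where "R = (\<Sum>a\<in>Poly_Mapping.keys P. monom (Poly_Mapping.lookup P a) (d a))"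
  have "poly R t = 0" for t :: real
  proof -
    have em: "evalmonoG (\<lambda>k y. y k) a (\<lambda>k. t ^ (B^k)) = t ^ d a" if "a \<in> Poly_Mapping.keys P" for a
    proof -
      have "evalmonoG (\<lambda>k y. y k) a (\<lambda>k. t ^ (B^k)) = (\<Prod>k<n. (t ^ (B^k)) ^ Poly_Mapping.lookup a k)"
        by (rule evalmonoG_superset) (use akeys[OF that] in auto)
      also have "\<dots> = (\<Prod>k<n. t ^ (Poly_Mapping.lookup a k * B^k))"
        by (simp add: power_mult[symmetric] mult.commute)
      also have "\<dots> = t ^ d a" by (simp add: d_def power_sum)
      finally show ?thesis .
    qed
    have "poly R t = (\<Sum>a\<in>Poly_Mapping.keys P. Poly_Mapping.lookup P a * t ^ d a)"
      by (simp add: R_def poly_sum poly_monom)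
    also have "\<dots> = evalY (\<lambda>k. t ^ (B^k)) P"
      unfolding evalY_def evalpG_def by (rule sum.cong) (simp_all add: em)
    finally show ?thesis using assms by simp
  qed
  then have R0: "R = 0" using poly_all_0_iff_0 by blast
  obtain a0 where a0: "a0 \<in> Poly_Mapping.keys P" using Pnz by (metis keys_eq_empty all_not_in_conv)
  have "coeff R (d a0) = (\<Sum>a\<in>Poly_Mapping.keys P. if d a = d a0 then Poly_Mapping.lookup P a else 0)"
    by (simp add: R_def coeff_sum)
  also have "\<dots> = (\<Sum>a\<in>Poly_Mapping.keys P. if a = a0 then Poly_Mapping.lookup P a else 0)"
    by (rule sum.cong) (use dinj a0 in auto)
  also have "\<dots> = Poly_Mapping.lookup P a0" using a0 by simp
  finally have "Poly_Mapping.lookup P a0 = 0" using R0 by simp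
  then show False using a0 by (simp add: in_keys_iff)
qed



definition gN :: "real \<Rightarrow> nat \<Rightarrow> nat \<Rightarrow> (nat \<Rightarrow> real) \<Rightarrow> real" where
  "gN \<theta> N k x = (\<Sum>i<N. (x i - \<theta> * real (i+1))^(k+1) - (- \<theta> * real (i+1))^(k+1))"

lemma cpoly_diff_const: "cpoly f a \<Longrightarrow> cpoly (\<lambda>x. f x - c) a"
  using cpoly_add[of f a "\<lambda>x. - c"] cpoly_mono[OF cpoly_const[of "-c"], of a] by simp

lemma cpoly_gN: "cpoly (gN \<theta> N k) (k+1)"
proof -
  have "cpoly (\<lambda>x. \<Sum>i<N. (x i - \<theta> * real (i+1))^(k+1) - (- \<theta> * real (i+1))^(k+1)) (k+1)"
  proof (rule cpoly_sum)
    fix i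
    have "cpoly (\<lambda>x. x i - \<theta> * real (i+1)) 1" by (rule cpoly_diff_const[OF cpoly_coord])
    from cpoly_pow[OF this, of "k+1"]
    have "cpoly (\<lambda>x. (x i - \<theta> * real (i+1))^(k+1)) (k+1)" by simp
    then show "cpoly (\<lambda>x. (x i - \<theta> * real (i+1))^(k+1) - (- \<theta> * real (i+1))^(k+1)) (k+1)"
      by (rule cpoly_diff_const)
  qed simp
  then show ?thesis by (simp add: gN_def[abs_def])
qed

lemma nat_bound_image: "finite A \<Longrightarrow> \<exists>D. \<forall>a\<in>A. (f a :: nat) \<le> D"
  by (metis finite_imageI finite_nat_set_iff_bounded_le imageI)

lemma chain_mono:
  fixes v :: "nat \<Rightarrow> nat" and N :: nat
  assumes "\<forall>i. i+1 < N \<longrightarrow> v (i+1) \<le> (v i :: nat)"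
  shows "i \<le> j \<Longrightarrow> j < N \<Longrightarrow> v j \<le> v i"
proof (induction j)
  case 0 then show ?case by simp
next
  case (Suc j)
  show ?case
  proof (cases "i = Suc j")
    case True then show ?thesis by simp
  next
    case False
    then have "i \<le> j" using Suc.prems by simp
    then have "v j \<le> v i" using Suc by simp
    moreover have "v (Suc j) \<le> v j" using assms Suc.prems by auto
    ultimately show ?thesis by simp
  qed
qed

lemma part_of_v:
  assumes pos: "\<forall>i<N. v i \<ge> 1" and mon: "\<forall>i. i+1 < N \<longrightarrow> v (i+1) \<le> v i"
  shows "map v [0..<N] \<in> YY" "pstar \<theta> (k+1) (map v [0..<N]) = gN \<theta> N k (\<lambda>i. real (v i))"
proof -
  have "sorted_wrt (\<ge>) (map v [0..<N])"
    unfolding sorted_wrt_iff_nth_less using chain_mono[OF mon] by auto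
  moreover have "0 \<notin> set (map v [0..<N])" using pos by fastforce
  ultimately show "map v [0..<N] \<in> YY" by (simp add: YY_def is_partition_def)
  have pa: "part_at (map v [0..<N]) (Suc i) = v i" if "i < N" for i
    using that by (simp add: part_at_def)
  have "pstar \<theta> (k+1) (map v [0..<N]) = (\<Sum>i<N. (real (part_at (map v [0..<N]) (Suc i)) - \<theta> * real (Suc i)) ^ (k+1) - (- \<theta> * real (Suc i)) ^ (k+1))"
    unfolding pstar_def by (simp add: sum.atLeast1_atMost_eq)
  also have "\<dots> = gN \<theta> N k (\<lambda>i. real (v i))"
    unfolding gN_def by (rule sum.cong) (simp_all add: pa)
  finally show "pstar \<theta> (k+1) (map v [0..<N]) = gN \<theta> N k (\<lambda>i. real (v i))" .
qed

lemma pstar_indep_real: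
  assumes hyp: "\<forall>xs\<in>YY. evalpG (\<lambda>k. pstar \<theta> (k+1)) P xs = 0"
  shows "evalpG (gN \<theta> N) P x = 0"
proof -
  obtain D where D: "\<forall>a\<in>Poly_Mapping.keys P. wdeg (\<lambda>k. k+1) a \<le> D"
    using nat_bound_image[OF finite_keys, of P "wdeg (\<lambda>k. k+1)"] by blast
  have cp: "cpoly (\<lambda>x. evalpG (gN \<theta> N) P x) D"
    by (rule cpoly_evalpG) (use cpoly_gN D in auto)
  show ?thesis
  proof (rule grid_dominant[OF cp])
    fix v :: "nat \<Rightarrow> nat"
    assume pos: "\<forall>i<N. v i \<ge> 1" and mon: "\<forall>i. i+1 < N \<longrightarrow> v (i+1) \<le> v i"
    have "evalpG (gN \<theta> N) P (\<lambda>i. real (v i)) = evalpG (\<lambda>k. pstar \<theta> (k+1)) P (map v [0..<N])"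
      by (rule evalpG_cong_vars) (rule part_of_v(2)[OF pos mon, symmetric])
    also have "\<dots> = 0" using hyp part_of_v(1)[OF pos mon] by blast
    finally show "evalpG (gN \<theta> N) P (\<lambda>i. real (v i)) = 0" .
  next
    fix x x' :: "nat \<Rightarrow> real" assume "\<forall>i<N. x i = x' i"
    then show "evalpG (gN \<theta> N) P x = evalpG (gN \<theta> N) P x'"
      by (intro evalpG_cong_vars) (simp add: gN_def)
  qed
qed

lemma block_div_mod:
  fixes M :: nat
  assumes "j*M \<le> i" "i < j*M + M"
  shows "i div M = j" "i mod M = i - j*M"
proof -
  have M: "M > 0" using assms by simp
  have i: "i = (i - j*M) + j*M" using assms by simp
  have r: "i - j*M < M" using assms by simp
  have "i div M = ((i - j*M) + j*M) div M" using i by simp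
  also have "\<dots> = j + (i - j*M) div M" using M by (simp only: div_mult_self1)
  also have "(i - j*M) div M = 0" using r by simp
  finally show "i div M = j" by simp
  have "i mod M = ((i - j*M) + j*M) mod M" using i by simp
  also have "\<dots> = (i - j*M) mod M" by (simp only: mod_mult_self1)
  also have "\<dots> = i - j*M" using r by simp
  finally show "i mod M = i - j*M" .
qed

lemma block_sum:
  fixes f :: "nat \<Rightarrow> real" and M :: nat
  assumes mm: "\<forall>j<n. mm j \<le> M"
  shows "(\<Sum>i<n*M. if i mod M < mm (i div M) then f (i div M) else 0) = (\<Sum>j<n. real (mm j) * f j)"
proof -
  let ?F = "\<lambda>i. if i mod M < mm (i div M) then f (i div M) else 0"
  have "(\<Sum>i<n*M. ?F i) = (\<Sum>j<n. \<Sum>i\<in>{j*M..<j*M+M}. ?F i)"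
    by (rule sum.nat_group[symmetric])
  also have "\<dots> = (\<Sum>j<n. real (mm j) * f j)"
  proof (rule sum.cong[OF refl])
    fix j assume j: "j \<in> {..<n}"
    have "(\<Sum>i\<in>{j*M..<j*M+M}. ?F i) = (\<Sum>i\<in>{j*M..<j*M+M}. if i \<in> {j*M..<j*M + mm j} then f j else 0)"
    proof (rule sum.cong[OF refl])
      fix i assume "i \<in> {j*M..<j*M+M}"
      then have "j*M \<le> i" "i < j*M + M" by auto
      from block_div_mod[OF this] show "?F i = (if i \<in> {j*M..<j*M + mm j} then f j else 0)"
        using \<open>j*M \<le> i\<close> by auto
    qed
    also have "\<dots> = (\<Sum>i\<in>{j*M..<j*M + mm j}. f j)"
      by (rule sum.mono_neutral_cong_right) (use mm j in auto)
    also have "\<dots> = real (mm j) * f j" by simp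
    finally show "(\<Sum>i\<in>{j*M..<j*M+M}. ?F i) = real (mm j) * f j" .
  qed
  finally show ?thesis .
qed



lemma pow_if0: "(if P then a else (0::real))^(Suc k) = (if P then a^(Suc k) else 0)"
  by simp

lemma pstar_indep_Y:
  assumes hyp: "\<forall>xs\<in>YY. evalpG (\<lambda>k. pstar \<theta> (k+1)) P xs = 0"
  shows "evalY y P = 0"
proof -
  obtain n where n: "\<forall>k\<in>vars P. k < n" using vars_bound by blast
  obtain d where d: "\<forall>a\<in>Poly_Mapping.keys P. wdeg (\<lambda>_. 1) a \<le> d"
    using nat_bound_image[OF finite_keys, of P "wdeg (\<lambda>_. 1)"] by blast
  define M where "M = d + 1"
  define N where "N = n * M"
  define c where "c k = (\<Sum>i<N. (- \<theta> * real (i+1))^(k+1))" for k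
  define hh where "hh k m = (\<Sum>j<n. m j * real (j+1)^(k+1)) - c k" for k and m :: "nat \<Rightarrow> real"
  have cph: "cpoly (hh k) 1" for k
  proof -
    have "cpoly (\<lambda>m. \<Sum>j<n. real (j+1)^(k+1) * m j) 1"
    proof (rule cpoly_sum)
      fix j show "cpoly (\<lambda>m. real (j+1)^(k+1) * m j) 1" by (rule cpoly_scale[OF cpoly_coord])
    qed simp
    then have "cpoly (\<lambda>m. (\<Sum>j<n. real (j+1)^(k+1) * m j) - c k) 1" by (rule cpoly_diff_const)
    then show ?thesis by (simp add: hh_def[abs_def] mult.commute)
  qed
  have cpQ: "cpoly (\<lambda>m. evalpG hh P m) d" by (rule cpoly_evalpG) (use cph d in auto)
  have Q0: "evalpG hh P m = 0" for m
  proof (rule grid_box[OF cpQ, of n])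
    fix mm :: "nat \<Rightarrow> nat" assume mm: "\<forall>i<n. mm i \<le> d"
    define x where "x i = \<theta> * real (i+1) + (if i mod M < mm (i div M) then real (i div M + 1) else 0)" for i
    have "gN \<theta> N k x = hh k (\<lambda>i. real (mm i))" for k
    proof -
      have xi: "x i - \<theta> * real (i+1) = (if i mod M < mm (i div M) then real (i div M + 1) else 0)" for i
        by (simp add: x_def)
      have pw: "(if i mod M < mm (i div M) then real (i div M + 1) else 0)^(k+1) = (if i mod M < mm (i div M) then real (i div M + 1)^(k+1) else 0)" for i
        by simp
      have "gN \<theta> N k x = (\<Sum>i<N. (if i mod M < mm (i div M) then real (i div M + 1)^(k+1) else 0) - (- \<theta> * real (i+1))^(k+1))"
        unfolding gN_def xi pw by (rule refl)
      also have "\<dots> = (\<Sum>i<N. (if i mod M < mm (i div M) then real (i div M + 1)^(k+1) else 0)) - c k"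
        unfolding c_def by (rule sum_subtractf)
      finally have "gN \<theta> N k x = (\<Sum>i<N. (if i mod M < mm (i div M) then real (i div M + 1)^(k+1) else 0)) - c k" .
      also have "(\<Sum>i<N. (if i mod M < mm (i div M) then real (i div M + 1)^(k+1) else 0)) = (\<Sum>j<n. real (mm j) * real (j+1)^(k+1))"
        unfolding N_def by (rule block_sum) (use mm in \<open>auto simp: M_def\<close>)
      finally show ?thesis by (simp add: hh_def)
    qed
    then have "evalpG hh P (\<lambda>i. real (mm i)) = evalpG (gN \<theta> N) P x" by (intro evalpG_cong_vars) simp
    also have "\<dots> = 0" by (rule pstar_indep_real[OF hyp])
    finally show "evalpG hh P (\<lambda>i. real (mm i)) = 0" .
  next
    fix x x' :: "nat \<Rightarrow> real" assume "\<forall>i<n. x i = x' i"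
    then show "evalpG hh P x = evalpG hh P x'" by (intro evalpG_cong_vars) (simp add: hh_def)
  qed
  obtain m where m: "\<forall>k<n. (\<Sum>j<n. m j * real (j+1)^(k+1)) = y k + c k"
    using vandermonde_solve1[of n "\<lambda>k. y k + c k"] by blast
  have "evalY y P = evalpG hh P m"
    unfolding evalY_def by (rule evalpG_cong_vars) (use n m in \<open>auto simp: hh_def\<close>)
  also have "\<dots> = 0" by (rule Q0)
  finally show ?thesis .
qed

lemma lower_tri_surj:
  fixes a :: "nat \<Rightarrow> nat \<Rightarrow> real"
  assumes "\<forall>k. a k k \<noteq> 0"
  shows "\<exists>z. \<forall>k<n. (\<Sum>j\<le>k. a k j * z j) = y k"
proof (induction n)
  case 0 then show ?case by simp
next
  case (Suc n)
  then obtain z where z: "\<forall>k<n. (\<Sum>j\<le>k. a k j * z j) = y k" by blast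
  define z' where "z' = z(n := (y n - (\<Sum>j<n. a n j * z j)) / a n n)"
  have "(\<Sum>j\<le>k. a k j * z' j) = y k" if "k < Suc n" for k
  proof (cases "k < n")
    case True
    have "(\<Sum>j\<le>k. a k j * z' j) = (\<Sum>j\<le>k. a k j * z j)"
      by (rule sum.cong) (use True in \<open>auto simp: z'_def\<close>)
    then show ?thesis using z True by simp
  next
    case False
    then have k: "k = n" using that by simp
    have "(\<Sum>j\<le>n. a n j * z' j) = (\<Sum>j<n. a n j * z' j) + a n n * z' n"
      by (simp add: lessThan_Suc_atMost[symmetric])
    also have "(\<Sum>j<n. a n j * z' j) = (\<Sum>j<n. a n j * z j)"
      by (rule sum.cong) (auto simp: z'_def)
    also have "a n n * z' n = y n - (\<Sum>j<n. a n j * z j)"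
      using assms by (simp add: z'_def)
    finally show ?thesis using k by simp
  qed
  then show ?case by blast
qed

lemma pbold_alg_indep:
  assumes th: "\<theta> \<noteq> 0" and hyp: "\<forall>xs\<in>YY. evalp (\<lambda>k. pbold \<theta> (k+2)) P xs = 0"
  shows "P = 0"
proof -
  define a where "a k j = real ((k+2) choose (j+1)) * \<theta>^(k+1-j)" for k j
  define Lm where "Lm k y = (\<Sum>j\<in>{..k}. a k j * y j)" for k and y :: "nat \<Rightarrow> real"
  have pb: "pbold \<theta> (k+2) xs = Lm k (\<lambda>j. pstar \<theta> (j+1) xs)" if xs: "xs \<in> YY" for k xs
  proof -
    have "pbold \<theta> (k+2) xs = (\<Sum>j<Suc (k+1). real ((k+2) choose j) * \<theta>^(k+2-j) * pstar \<theta> j xs)"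
      using pbold_pstar_YY[OF xs, of "k+2" \<theta>] by simp
    also have "\<dots> = (\<Sum>j<k+1. real ((k+2) choose (Suc j)) * \<theta>^(k+2-Suc j) * pstar \<theta> (Suc j) xs)"
      by (simp only: sum.lessThan_Suc_shift pstar_0)
    also have "\<dots> = Lm k (\<lambda>j. pstar \<theta> (j+1) xs)"
      unfolding Lm_def a_def by (rule sum.cong) auto
    finally show ?thesis .
  qed
  have rL: "repr (Lm k)" for k
    using repr_linear[of "a k" "{..k}"] by (simp add: Lm_def[abs_def])
  obtain P' where P': "\<forall>y. evalY y P' = evalpG Lm P y"
    using evalpG_subst[of Lm P] rL by blast
  have "\<forall>xs\<in>YY. evalpG (\<lambda>k. pstar \<theta> (k+1)) P' xs = 0"
  proof
    fix xs assume xs: "xs \<in> YY"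
    have "evalpG (\<lambda>k. pstar \<theta> (k+1)) P' xs = evalY (\<lambda>j. pstar \<theta> (j+1) xs) P'"
      unfolding evalY_def by (rule evalpG_cong_vars) simp
    also have "\<dots> = evalpG Lm P (\<lambda>j. pstar \<theta> (j+1) xs)" using P' by simp
    also have "\<dots> = evalpG (\<lambda>k. pbold \<theta> (k+2)) P xs"
      by (rule evalpG_cong_vars) (rule pb[OF xs, symmetric])
    also have "\<dots> = 0" using hyp xs by (simp add: evalp_G)
    finally show "evalpG (\<lambda>k. pstar \<theta> (k+1)) P' xs = 0" .
  qed
  then have L0: "evalpG Lm P y = 0" for y using pstar_indep_Y P' by metis
  obtain n where n: "\<forall>k\<in>vars P. k < n" using vars_bound by blast
  have akk: "\<forall>k. a k k \<noteq> 0" using th by (simp add: a_def)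
  have "evalY y P = 0" for y
  proof -
    obtain z where z: "\<forall>k<n. (\<Sum>j\<le>k. a k j * z j) = y k" using lower_tri_surj[where a=a and n=n and y=y, OF akk] by blast
    have "evalY y P = evalpG Lm P z"
      unfolding evalY_def by (rule evalpG_cong_vars) (use n z in \<open>auto simp: Lm_def\<close>)
    then show ?thesis using L0 by simp
  qed
  then show ?thesis by (intro kronecker) blast
qed

theorem mainTheorem8:
  fixes \<theta> :: real
  assumes "\<theta> > 0"
  shows "(\<forall>m\<ge>2. pbold \<theta> m \<in> Atheta \<theta>)
    \<and> alg_indep_on_Y (\<lambda>k. pbold \<theta> (k + 2))
    \<and> Atheta \<theta> = (\<Union>n. Pfilt \<theta> n)
    \<and> (\<forall>n. Afilt \<theta> n = Pfilt \<theta> n)"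
proof (intro conjI)
  have th: "\<theta> \<noteq> 0" using assms by simp
  show AP: "\<forall>n. Afilt \<theta> n = Pfilt \<theta> n" using Afilt_eq_Pfilt[OF th] by blast
  show "\<forall>m\<ge>2. pbold \<theta> m \<in> Atheta \<theta>"
  proof (intro allI impI)
    fix m :: nat assume "m \<ge> 2"
    then have "m = (m - 2) + 2" by simp
    then have "pbold \<theta> m \<in> Afilt \<theta> (m - 2 + 1)" using pbold_in_A[of \<theta> "m-2"] by metis
    then show "pbold \<theta> m \<in> Atheta \<theta>" unfolding Atheta_def by blast
  qed
  show "alg_indep_on_Y (\<lambda>k. pbold \<theta> (k + 2))"
    unfolding alg_indep_on_Y_def using pbold_alg_indep[OF th] by blast
  show "Atheta \<theta> = (\<Union>n. Pfilt \<theta> n)" unfolding Atheta_def using AP by simp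
qed


end
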